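(* Let $G$ be a finite group, let $g\in G$, and let $\phi=\sum_{\chi\in\mathrm{Irr}(G)}a_\chi\chi$ be a non-negative virtual character of $G$. Then $$c(g)\;\le\;\mathrm{Prob}\big([a,b]^{-1}g\in\ker(\phi)\big)\;=\;\mathrm{Prob}\big(\xi_{g,\phi}=\phi(1)\big),$$ and if moreover $\phi$ is exact, then $c(g)=\mathrm{Prob}\big(\xi_{g,\phi}=\phi(1)\big)$.
   Context: $G$ is a finite group of order $m$; $\mathrm{Irr}(G)$ is the set of irreducible complex characters of $G$. $G\times G$ is a probability space with the uniform measure (mass $1/m^2$ at each point), and $\mathrm{Prob}$ refers to this measure, with $(a,b)$ the random pair. For $g\in G$, $c(g)=|\{(x,y)\in G\times G:[x,y]=g\}|/|G\times G|$. A virtual character $\phi=\sum_{\chi\in\mathrm{Irr}(G)}a_\chi\chi$ with $a_\chi\in\mathbb{C}$ is called non-negative if (a) $\mathrm{Re}(\phi(h))\ge 0$ for all $h\in G$, and (b) all coefficients $a_\chi$ are non-negative real numbers and at least one is non-zero. Its kernel is $\ker(\phi)=\{h\in G:\phi(h)=\phi(1)\}$, and a non-negative virtual character is called exact if $\ker(\phi)=\{1\}$. For $g\in G$, the real random variable $\xi_{g,\phi}$ on $G\times G$ is $\xi_{g,\phi}(a,b)=\mathrm{Re}\big(\phi([a,b]^{-1}g)\big)$. *)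

theory Defs
  imports "HOL-Algebra.Group" "Jordan_Normal_Form.Matrix"
begin

definition commutator :: "('a, 'b) monoid_scheme \<Rightarrow> 'a \<Rightarrow> 'a \<Rightarrow> 'a" where
  "commutator G x y = inv\<^bsub>G\<^esub> x \<otimes>\<^bsub>G\<^esub> inv\<^bsub>G\<^esub> y \<otimes>\<^bsub>G\<^esub> x \<otimes>\<^bsub>G\<^esub> y"

definition prob_GG :: "('a, 'b) monoid_scheme \<Rightarrow> ('a \<Rightarrow> 'a \<Rightarrow> bool) \<Rightarrow> real" where
  "prob_GG G P = real (card {(x, y). x \<in> carrier G \<and> y \<in> carrier G \<and> P x y})
                 / (real (card (carrier G)))^2"

definition comm_prob :: "('a, 'b) monoid_scheme \<Rightarrow> 'a \<Rightarrow> real" where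
  "comm_prob G g = prob_GG G (\<lambda>x y. commutator G x y = g)"

definition is_rep :: "('a, 'b) monoid_scheme \<Rightarrow> nat \<Rightarrow> ('a \<Rightarrow> complex mat) \<Rightarrow> bool" where
  "is_rep G n \<rho> \<longleftrightarrow>
     (\<forall>x \<in> carrier G. \<rho> x \<in> carrier_mat n n) \<and>
     \<rho> \<one>\<^bsub>G\<^esub> = 1\<^sub>m n \<and>
     (\<forall>x \<in> carrier G. \<forall>y \<in> carrier G. \<rho> (x \<otimes>\<^bsub>G\<^esub> y) = \<rho> x * \<rho> y)"

definition is_subspace :: "nat \<Rightarrow> complex vec set \<Rightarrow> bool" where
  "is_subspace n W \<longleftrightarrow> W \<subseteq> carrier_vec n \<and> 0\<^sub>v n \<in> W \<and>
     (\<forall>v \<in> W. \<forall>w \<in> W. v + w \<in> W) \<and> (\<forall>c. \<forall>v \<in> W. c \<cdot>\<^sub>v v \<in> W)"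

definition is_irr_rep :: "('a, 'b) monoid_scheme \<Rightarrow> nat \<Rightarrow> ('a \<Rightarrow> complex mat) \<Rightarrow> bool" where
  "is_irr_rep G n \<rho> \<longleftrightarrow> is_rep G n \<rho> \<and> n > 0 \<and>
     (\<forall>W. is_subspace n W \<and> (\<forall>x \<in> carrier G. \<forall>w \<in> W. \<rho> x *\<^sub>v w \<in> W)
          \<longrightarrow> W = {0\<^sub>v n} \<or> W = carrier_vec n)"

definition mat_trace :: "complex mat \<Rightarrow> complex" where
  "mat_trace A = (\<Sum>i < dim_row A. A $$ (i, i))"

definition character_of :: "('a, 'b) monoid_scheme \<Rightarrow> ('a \<Rightarrow> complex mat) \<Rightarrow> 'a \<Rightarrow> complex" where
  "character_of G \<rho> = (\<lambda>x. if x \<in> carrier G then mat_trace (\<rho> x) else 0)"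

definition Irr :: "('a, 'b) monoid_scheme \<Rightarrow> ('a \<Rightarrow> complex) set" where
  "Irr G = {character_of G \<rho> | n \<rho>. is_irr_rep G n \<rho>}"

definition virtual_char :: "('a, 'b) monoid_scheme \<Rightarrow> (('a \<Rightarrow> complex) \<Rightarrow> complex) \<Rightarrow> 'a \<Rightarrow> complex" where
  "virtual_char G a = (\<lambda>h. \<Sum>\<chi> \<in> Irr G. a \<chi> * \<chi> h)"

definition nonneg_virtual_char :: "('a, 'b) monoid_scheme \<Rightarrow> (('a \<Rightarrow> complex) \<Rightarrow> complex) \<Rightarrow> bool" where
  "nonneg_virtual_char G a \<longleftrightarrow>
     (\<forall>h \<in> carrier G. Re (virtual_char G a h) \<ge> 0) \<and>
     (\<forall>\<chi> \<in> Irr G. a \<chi> \<in> \<real> \<and> Re (a \<chi>) \<ge> 0) \<and>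
     (\<exists>\<chi> \<in> Irr G. a \<chi> \<noteq> 0)"

definition vchar_ker :: "('a, 'b) monoid_scheme \<Rightarrow> ('a \<Rightarrow> complex) \<Rightarrow> 'a set" where
  "vchar_ker G \<phi> = {h \<in> carrier G. \<phi> h = \<phi> \<one>\<^bsub>G\<^esub>}"

definition exact_vchar :: "('a, 'b) monoid_scheme \<Rightarrow> (('a \<Rightarrow> complex) \<Rightarrow> complex) \<Rightarrow> bool" where
  "exact_vchar G a \<longleftrightarrow> nonneg_virtual_char G a \<and> vchar_ker G (virtual_char G a) = {\<one>\<^bsub>G\<^esub>}"

definition xi :: "('a, 'b) monoid_scheme \<Rightarrow> 'a \<Rightarrow> ('a \<Rightarrow> complex) \<Rightarrow> 'a \<Rightarrow> 'a \<Rightarrow> real" where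
  "xi G g \<phi> x y = Re (\<phi> (inv\<^bsub>G\<^esub> (commutator G x y) \<otimes>\<^bsub>G\<^esub> g))"

end

theory Submission
  imports Defs "HOL-Algebra.Multiplicative_Group" "Jordan_Normal_Form.Schur_Decomposition"
begin

lemma mat_trace_comm:
  fixes X Y :: "complex mat"
  assumes "X \<in> carrier_mat n k" "Y \<in> carrier_mat k n"
  shows "mat_trace (X * Y) = mat_trace (Y * X)"
proof -
  have "mat_trace (X * Y) = (\<Sum>i<n. \<Sum>j<k. X $$ (i,j) * Y $$ (j,i))"
    using assms by (simp add: mat_trace_def scalar_prod_def lessThan_atLeast0)
  also have "\<dots> = (\<Sum>j<k. \<Sum>i<n. Y $$ (j,i) * X $$ (i,j))"
    by (subst sum.swap) (simp add: mult.commute)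
  also have "\<dots> = mat_trace (Y * X)"
    using assms by (simp add: mat_trace_def scalar_prod_def lessThan_atLeast0)
  finally show ?thesis .
qed

lemma poly_linfac_root: "(x::complex) \<in> set xs \<Longrightarrow> poly (\<Prod>a\<leftarrow>xs. [:- a, 1:]) x = 0"
proof (induct xs)
  case Nil
  then show ?case by simp
next
  case (Cons b ys)
  have e: "poly (\<Prod>a\<leftarrow>b # ys. [:- a, 1:]) x = (x - b) * poly (\<Prod>a\<leftarrow>ys. [:- a, 1:]) x"
    by (simp add: algebra_simps)
  show ?case unfolding e using Cons by (cases "x = b") simp_all
qed

lemma trace_bound:
  fixes A :: "complex mat"
  assumes A: "A \<in> carrier_mat n n" and pw: "A ^\<^sub>m m = 1\<^sub>m n" and m: "m > 0"
  shows "cmod (mat_trace A) \<le> real n"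
proof -
  obtain es where es: "char_poly A = (\<Prod> a \<leftarrow> es. [:- a, 1:])"
    using char_poly_factorized[OF A] by blast
  obtain B where B: "B \<in> carrier_mat n n" "upper_triangular B" "similar_mat A B"
    using schur_decomposition_exists[OF A es] by blast
  have cpB: "char_poly A = (\<Prod> a \<leftarrow> diag_mat B. [:- a, 1:])"
    using char_poly_similar[OF B(3)] char_poly_upper_triangular[OF B(1) B(2)] by simp
  have ev: "cmod (B $$ (i,i)) = 1" if i: "i < n" for i
  proof -
    let ?l = "B $$ (i,i)"
    have "?l \<in> set (diag_mat B)" using i B(1) by (auto simp: diag_mat_def)
    hence "poly (char_poly A) ?l = 0" unfolding cpB
      by (rule poly_linfac_root)
    hence "eigenvalue A ?l" using eigenvalue_root_char_poly[OF A] by simp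
    then obtain v where v: "eigenvector A v ?l" unfolding eigenvalue_def by blast
    have "A ^\<^sub>m m *\<^sub>v v = ?l ^ m \<cdot>\<^sub>v v" by (rule eigenvector_pow[OF A v])
    moreover have vc: "v \<in> carrier_vec n" "v \<noteq> 0\<^sub>v n" using v A unfolding eigenvector_def by auto
    ultimately have eq: "v = ?l ^ m \<cdot>\<^sub>v v" using pw by simp
    obtain j where j: "j < n" "v $ j \<noteq> 0" using vc by (metis eq_vecI carrier_vecD index_zero_vec)
    have "v $ j = ?l ^ m * v $ j" using eq j vc by (metis index_smult_vec(1) carrier_vecD)
    hence "?l ^ m = 1" using j by simp
    thus ?thesis using power_eq_1_iff[of ?l m] m by simp
  qed
  obtain P Q where PQ: "similar_mat_wit A B P Q" using B(3) unfolding similar_mat_def by blast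
  have P: "P \<in> carrier_mat n n" and Q: "Q \<in> carrier_mat n n" and QP: "Q * P = 1\<^sub>m n"
    and AE: "A = P * B * Q"
    using PQ A unfolding similar_mat_wit_def Let_def by auto
  have "mat_trace A = mat_trace ((P * B) * Q)" using AE by simp
  also have "\<dots> = mat_trace (Q * (P * B))" using P B(1) Q by (intro mat_trace_comm) auto
  also have "Q * (P * B) = (Q * P) * B" using P B(1) Q by (simp add: assoc_mult_mat)
  also have "\<dots> = B" using QP B(1) by simp
  finally have "mat_trace A = (\<Sum>i<n. B $$ (i,i))" using B(1) by (simp add: mat_trace_def)
  hence "cmod (mat_trace A) \<le> (\<Sum>i<n. cmod (B $$ (i,i)))" by (simp add: norm_sum)
  also have "\<dots> = real n" using ev by simp
  finally show ?thesis .
qed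

lemma rep_pow:
  assumes G: "group G" and r: "is_rep G n \<rho>" and h: "h \<in> carrier G"
  shows "\<rho> (h [^]\<^bsub>G\<^esub> (k::nat)) = \<rho> h ^\<^sub>m k"
proof (induct k)
  case 0
  have "\<rho> h \<in> carrier_mat n n" using r h unfolding is_rep_def by auto
  then show ?case using r unfolding is_rep_def by simp
next
  case (Suc k)
  interpret group G by (rule G)
  have "\<rho> (h [^]\<^bsub>G\<^esub> Suc k) = \<rho> (h [^]\<^bsub>G\<^esub> k \<otimes>\<^bsub>G\<^esub> h)" by simp
  also have "\<dots> = \<rho> (h [^]\<^bsub>G\<^esub> k) * \<rho> h" using r h unfolding is_rep_def by simp
  finally show ?case using Suc by simp
qed

lemma char_bound:
  assumes G: "group G" and fin: "finite (carrier G)" and chi: "\<chi> \<in> Irr G"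
    and h: "h \<in> carrier G"
  shows "\<exists>n::nat. \<chi> \<one>\<^bsub>G\<^esub> = of_nat n \<and> cmod (\<chi> h) \<le> real n"
proof -
  interpret group G by (rule G)
  obtain n \<rho> where chi_def: "\<chi> = character_of G \<rho>" and r: "is_irr_rep G n \<rho>"
    using chi unfolding Irr_def by blast
  have r: "is_rep G n \<rho>" using r unfolding is_irr_rep_def by auto
  have one: "\<chi> \<one>\<^bsub>G\<^esub> = of_nat n" using r unfolding chi_def character_of_def is_rep_def
    by (simp add: mat_trace_def)
  have A: "\<rho> h \<in> carrier_mat n n" using r h unfolding is_rep_def by auto
  have pos: "Coset.order G > 0" using fin by (simp add: order_gt_0_iff_finite)
  have "\<rho> h ^\<^sub>m Coset.order G = \<rho> (h [^]\<^bsub>G\<^esub> Coset.order G)" using rep_pow[OF G r h] by simp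
  also have "\<dots> = 1\<^sub>m n" using pow_order_eq_1[OF h] r unfolding is_rep_def by simp
  finally have "cmod (mat_trace (\<rho> h)) \<le> real n" by (rule trace_bound[OF A _ pos])
  hence "cmod (\<chi> h) \<le> real n" using h unfolding chi_def character_of_def by simp
  with one show ?thesis by blast
qed

lemma prob_GG_cong:
  assumes "\<And>x y. x \<in> carrier G \<Longrightarrow> y \<in> carrier G \<Longrightarrow> P x y \<longleftrightarrow> Q x y"
  shows "prob_GG G P = prob_GG G Q"
proof -
  have "{(x, y). x \<in> carrier G \<and> y \<in> carrier G \<and> P x y}
      = {(x, y). x \<in> carrier G \<and> y \<in> carrier G \<and> Q x y}" using assms by auto
  thus ?thesis unfolding prob_GG_def by simp
qed

lemma prob_GG_mono:
  assumes fin: "finite (carrier G)"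
    and "\<And>x y. x \<in> carrier G \<Longrightarrow> y \<in> carrier G \<Longrightarrow> P x y \<Longrightarrow> Q x y"
  shows "prob_GG G P \<le> prob_GG G Q"
proof -
  have sub: "{(x, y). x \<in> carrier G \<and> y \<in> carrier G \<and> P x y}
      \<subseteq> {(x, y). x \<in> carrier G \<and> y \<in> carrier G \<and> Q x y}" using assms by auto
  have "{(x, y). x \<in> carrier G \<and> y \<in> carrier G \<and> Q x y} \<subseteq> carrier G \<times> carrier G" by auto
  hence "finite {(x, y). x \<in> carrier G \<and> y \<in> carrier G \<and> Q x y}"
    using fin by (meson finite_SigmaI finite_subset)
  hence "card {(x, y). x \<in> carrier G \<and> y \<in> carrier G \<and> P x y}
      \<le> card {(x, y). x \<in> carrier G \<and> y \<in> carrier G \<and> Q x y}"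
    using sub card_mono by blast
  thus ?thesis unfolding prob_GG_def by (intro divide_right_mono) auto
qed

lemma phi_facts:
  assumes G: "group G" and fin: "finite (carrier G)" and nn: "nonneg_virtual_char G a"
    and h: "h \<in> carrier G"
  shows "\<exists>R. virtual_char G a \<one>\<^bsub>G\<^esub> = of_real R \<and> cmod (virtual_char G a h) \<le> R"
proof -
  define f where "f \<chi> = Re (a \<chi> * \<chi> \<one>\<^bsub>G\<^esub>)" for \<chi>
  have each: "a \<chi> * \<chi> \<one>\<^bsub>G\<^esub> = of_real (f \<chi>) \<and> cmod (a \<chi> * \<chi> h) \<le> f \<chi>"
    if chi: "\<chi> \<in> Irr G" for \<chi>
  proof -
    obtain n :: nat where n: "\<chi> \<one>\<^bsub>G\<^esub> = of_nat n" "cmod (\<chi> h) \<le> real n"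
      using char_bound[OF G fin chi h] by blast
    have ar: "a \<chi> \<in> \<real>" "Re (a \<chi>) \<ge> 0" using nn chi unfolding nonneg_virtual_char_def by auto
    have ae: "a \<chi> = of_real (Re (a \<chi>))" using ar(1) by (simp add: complex_is_Real_iff complex_eq_iff)
    have e1: "a \<chi> * \<chi> \<one>\<^bsub>G\<^esub> = of_real (Re (a \<chi>) * real n)"
      using n(1) by (subst ae) simp
    have "cmod (a \<chi> * \<chi> h) = Re (a \<chi>) * cmod (\<chi> h)"
      using ar(2) by (subst ae) (simp add: norm_mult)
    also have "\<dots> \<le> Re (a \<chi>) * real n" using n(2) ar(2) by (simp add: mult_left_mono)
    finally show ?thesis using e1 unfolding f_def by simp
  qed
  have "virtual_char G a \<one>\<^bsub>G\<^esub> = (\<Sum>\<chi>\<in>Irr G. of_real (f \<chi>))"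
    unfolding virtual_char_def using each by (intro sum.cong) auto
  also have "\<dots> = of_real (sum f (Irr G))" by simp
  finally have 1: "virtual_char G a \<one>\<^bsub>G\<^esub> = of_real (sum f (Irr G))" .
  have "cmod (virtual_char G a h) \<le> (\<Sum>\<chi>\<in>Irr G. cmod (a \<chi> * \<chi> h))"
    unfolding virtual_char_def by (rule norm_sum)
  also have "\<dots> \<le> sum f (Irr G)" using each by (intro sum_mono) auto
  finally show ?thesis using 1 by blast
qed

lemma ker_iff:
  assumes G: "group G" and fin: "finite (carrier G)" and nn: "nonneg_virtual_char G a"
    and h: "h \<in> carrier G"
  shows "virtual_char G a h = virtual_char G a \<one>\<^bsub>G\<^esub> \<longleftrightarrow>
         complex_of_real (Re (virtual_char G a h)) = virtual_char G a \<one>\<^bsub>G\<^esub>"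
proof -
  obtain R where R: "virtual_char G a \<one>\<^bsub>G\<^esub> = of_real R" "cmod (virtual_char G a h) \<le> R"
    using phi_facts[OF G fin nn h] by blast
  define z where "z = virtual_char G a h"
  have "z = of_real R \<longleftrightarrow> complex_of_real (Re z) = of_real R"
  proof
    assume "z = of_real R" thus "complex_of_real (Re z) = of_real R" by simp
  next
    assume a: "complex_of_real (Re z) = of_real R"
    hence re: "Re z = R" by (metis of_real_eq_iff)
    have "cmod z ^ 2 = Re z ^ 2 + Im z ^ 2" by (rule cmod_power2)
    moreover have "Re z \<le> cmod z" by (rule complex_Re_le_cmod)
    moreover have "cmod z \<le> Re z" using R(2) re unfolding z_def by simp
    ultimately have "Im z ^ 2 = 0" by simp
    hence "Im z = 0" by simp
    thus "z = of_real R" using re by (simp add: complex_eq_iff)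
  qed
  thus ?thesis using R(1) unfolding z_def by simp
qed

theorem lemma1:
  fixes G :: "('a, 'b) monoid_scheme" and g :: 'a
    and a :: "('a \<Rightarrow> complex) \<Rightarrow> complex"
  assumes "group G" and "finite (carrier G)" and "g \<in> carrier G"
    and "nonneg_virtual_char G a"
  shows "comm_prob G g
           \<le> prob_GG G (\<lambda>x y. inv\<^bsub>G\<^esub> (commutator G x y) \<otimes>\<^bsub>G\<^esub> g
                                  \<in> vchar_ker G (virtual_char G a))
      \<and> prob_GG G (\<lambda>x y. inv\<^bsub>G\<^esub> (commutator G x y) \<otimes>\<^bsub>G\<^esub> g
                                  \<in> vchar_ker G (virtual_char G a))
         = prob_GG G (\<lambda>x y. complex_of_real (xi G g (virtual_char G a) x y)
                                  = virtual_char G a \<one>\<^bsub>G\<^esub>)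
      \<and> (exact_vchar G a \<longrightarrow>
         comm_prob G g = prob_GG G (\<lambda>x y. complex_of_real (xi G g (virtual_char G a) x y)
                                  = virtual_char G a \<one>\<^bsub>G\<^esub>))"
proof -
  interpret group G by (rule assms(1))
  have cc: "commutator G x y \<in> carrier G" if "x \<in> carrier G" "y \<in> carrier G" for x y
    using that unfolding commutator_def by simp
  have p1: "comm_prob G g
           \<le> prob_GG G (\<lambda>x y. inv\<^bsub>G\<^esub> (commutator G x y) \<otimes>\<^bsub>G\<^esub> g
                                  \<in> vchar_ker G (virtual_char G a))"
    unfolding comm_prob_def
  proof (rule prob_GG_mono[OF assms(2)])
    fix x y assume "x \<in> carrier G" "y \<in> carrier G" "commutator G x y = g"
    thus "inv\<^bsub>G\<^esub> (commutator G x y) \<otimes>\<^bsub>G\<^esub> g \<in> vchar_ker G (virtual_char G a)"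
      using assms(3) unfolding vchar_ker_def by simp
  qed
  have p2: "prob_GG G (\<lambda>x y. inv\<^bsub>G\<^esub> (commutator G x y) \<otimes>\<^bsub>G\<^esub> g
                                  \<in> vchar_ker G (virtual_char G a))
         = prob_GG G (\<lambda>x y. complex_of_real (xi G g (virtual_char G a) x y)
                                  = virtual_char G a \<one>\<^bsub>G\<^esub>)"
  proof (rule prob_GG_cong)
    fix x y assume xy: "x \<in> carrier G" "y \<in> carrier G"
    have h: "inv\<^bsub>G\<^esub> (commutator G x y) \<otimes>\<^bsub>G\<^esub> g \<in> carrier G" using cc[OF xy] assms(3) by simp
    show "(inv\<^bsub>G\<^esub> (commutator G x y) \<otimes>\<^bsub>G\<^esub> g \<in> vchar_ker G (virtual_char G a)) =
          (complex_of_real (xi G g (virtual_char G a) x y) = virtual_char G a \<one>\<^bsub>G\<^esub>)"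
      using ker_iff[OF assms(1,2,4) h] h unfolding vchar_ker_def xi_def by simp
  qed
  have p3: "comm_prob G g = prob_GG G (\<lambda>x y. inv\<^bsub>G\<^esub> (commutator G x y) \<otimes>\<^bsub>G\<^esub> g
                                  \<in> vchar_ker G (virtual_char G a))"
    if ex: "exact_vchar G a"
    unfolding comm_prob_def
  proof (rule prob_GG_cong)
    fix x y assume xy: "x \<in> carrier G" "y \<in> carrier G"
    have c: "commutator G x y \<in> carrier G" by (rule cc[OF xy])
    have k: "vchar_ker G (virtual_char G a) = {\<one>\<^bsub>G\<^esub>}" using ex unfolding exact_vchar_def by simp
    have "inv\<^bsub>G\<^esub> (commutator G x y) \<otimes>\<^bsub>G\<^esub> g = \<one>\<^bsub>G\<^esub> \<longleftrightarrow> commutator G x y = g"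
    proof
      assume e: "inv\<^bsub>G\<^esub> (commutator G x y) \<otimes>\<^bsub>G\<^esub> g = \<one>\<^bsub>G\<^esub>"
      have "commutator G x y = commutator G x y \<otimes>\<^bsub>G\<^esub> (inv\<^bsub>G\<^esub> (commutator G x y) \<otimes>\<^bsub>G\<^esub> g)"
        using e c by simp
      also have "\<dots> = g" using c assms(3) by (simp add: m_assoc[symmetric])
      finally show "commutator G x y = g" .
    next
      assume "commutator G x y = g" thus "inv\<^bsub>G\<^esub> (commutator G x y) \<otimes>\<^bsub>G\<^esub> g = \<one>\<^bsub>G\<^esub>"
        using assms(3) by simp
    qed
    thus "(commutator G x y = g) = (inv\<^bsub>G\<^esub> (commutator G x y) \<otimes>\<^bsub>G\<^esub> g \<in> vchar_ker G (virtual_char G a))"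
      using k by simp
  qed
  show ?thesis using p1 p2 p3 by simp
qed

end
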